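(* Let $G=(\Gamma,s)$ be a connected rooted graph with $\tilde V\neq\emptyset$. Every $p\in\mathrm{PF}(G)$ admits a prime decomposition, i.e. an ordered set partition $(A_1,\dots,A_k)$ of $\tilde V$ into nonempty blocks such that for every $i\in[k]$, the function $p^{A_i}:A_i\to\mathbb{Z}$ defined by $p^{A_i}(v)=p(v)-\deg^{A_1\cup\dots\cup A_{i-1}}(v)$ belongs to $\mathrm{PPF}(G^{A_i})$.
   Context: $\mathbb{N}=\{1,2,\dots\}$. A rooted graph $G=(\Gamma,s)$ is a finite undirected multigraph without loops with a distinguished vertex $s$ (the sink), possibly disconnected; $V$ is its vertex set and $\tilde V=V\setminus\{s\}$. $\mathrm{mult}(vw)$ is the number of edges between $v,w$; for $A\subseteq V$, $\deg^A(v)=\sum_{w\in A}\mathrm{mult}(vw)$. A $G$-parking function is a function $p:\tilde V\to\mathbb{N}$ such that for every nonempty $S\subseteq\tilde V$ there exists $v\in S$ with $p(v)\le\deg^{V\setminus S}(v)$; $\mathrm{PF}(G)$ is their set. For $A\subseteq\tilde V$, $G^A$ is the induced subgraph on $A\cup\{s\}$ rooted at $s$. For an ordered pair $(A,B)$ of nonempty disjoint sets with $A\cup B=\tilde V$ and $p\in\mathrm{PF}(G)$, $p^A(v)=p(v)$ for $v\in A$ and $p^B(v)=p(v)-\deg^A(v)$ for $v\in B$; $p$ is decomposable w.r.t. $(A,B)$ if $p^A\in\mathrm{PF}(G^A)$ and $p^B\in\mathrm{PF}(G^B)$. $p$ is prime if it is decomposable w.r.t. no such $(A,B)$ (in particular,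 if $|\tilde V|=1$ every parking function is prime). $\mathrm{PPF}(G)$ is the set of prime $G$-parking functions. *)

theory Defs
  imports Main
begin

definition rooted_graph :: "'a set \<Rightarrow> 'a \<Rightarrow> ('a \<Rightarrow> 'a \<Rightarrow> nat) \<Rightarrow> bool" where
  "rooted_graph V s mult \<longleftrightarrow> finite V \<and> s \<in> V \<and>
     (\<forall>v w. mult v w = mult w v) \<and> (\<forall>v. mult v v = 0) \<and>
     (\<forall>v w. mult v w > 0 \<longrightarrow> v \<in> V \<and> w \<in> V)"

definition connected_graph :: "'a set \<Rightarrow> ('a \<Rightarrow> 'a \<Rightarrow> nat) \<Rightarrow> bool" where
  "connected_graph V mult \<longleftrightarrow>
     (\<forall>v\<in>V. \<forall>w\<in>V. (\<lambda>x y. x \<in> V \<and> y \<in> V \<and> mult x y > 0)\<^sup>*\<^sup>* v w)"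

definition deg :: "('a \<Rightarrow> 'a \<Rightarrow> nat) \<Rightarrow> 'a set \<Rightarrow> 'a \<Rightarrow> int" where
  "deg mult A v = (\<Sum>w\<in>A. int (mult v w))"

text \<open>The induced subgraph G^A is (A \<union> {s}, s) with the same mult.\<close>
definition is_PF :: "'a set \<Rightarrow> 'a \<Rightarrow> ('a \<Rightarrow> 'a \<Rightarrow> nat) \<Rightarrow> ('a \<Rightarrow> int) \<Rightarrow> bool" where
  "is_PF V s mult p \<longleftrightarrow> (\<forall>v\<in>V - {s}. p v \<ge> 1) \<and>
     (\<forall>S. S \<subseteq> V - {s} \<and> S \<noteq> {} \<longrightarrow> (\<exists>v\<in>S. p v \<le> deg mult (V - S) v))"

definition is_PPF :: "'a set \<Rightarrow> 'a \<Rightarrow> ('a \<Rightarrow> 'a \<Rightarrow> nat) \<Rightarrow> ('a \<Rightarrow> int) \<Rightarrow> bool" where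
  "is_PPF V s mult p \<longleftrightarrow> is_PF V s mult p \<and>
     \<not> (\<exists>A B. A \<noteq> {} \<and> B \<noteq> {} \<and> A \<inter> B = {} \<and> A \<union> B = V - {s} \<and>
            is_PF (A \<union> {s}) s mult p \<and>
            is_PF (B \<union> {s}) s mult (\<lambda>v. p v - deg mult A v))"

end

theory Submission
  imports Defs
begin

lemma deg_Un:
  assumes "finite A" "finite X" "A \<inter> X = {}"
  shows "deg mult (A \<union> X) v = deg mult A v + deg mult X v"
  unfolding deg_def using assms by (simp add: sum.union_disjoint)

lemma gen:
  assumes "finite W" "s \<notin> W" "W \<noteq> {}" "is_PF (W \<union> {s}) s mult p"
  shows "\<exists>As :: 'a set list.
           (\<forall>i < length As. As ! i \<noteq> {}) \<and>
           (\<forall>i < length As. \<forall>j < length As. i \<noteq> j \<longrightarrow> As ! i \<inter> As ! j = {}) \<and>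
           \<Union> (set As) = W \<and>
           (\<forall>i < length As.
              is_PPF (As ! i \<union> {s}) s mult
                (\<lambda>v. p v - deg mult (\<Union> (set (take i As))) v))"
  using assms
proof (induction "card W" arbitrary: W p rule: less_induct)
  case less
  show ?case
  proof (cases "is_PPF (W \<union> {s}) s mult p")
    case True
    then show ?thesis using less.prems
      by (intro exI[of _ "[W]"]) (simp add: deg_def)
  next
    case False
    have WW: "(W \<union> {s}) - {s} = W" using less.prems by auto
    obtain A B where AB: "A \<noteq> {}" "B \<noteq> {}" "A \<inter> B = {}" "A \<union> B = W"
      "is_PF (A \<union> {s}) s mult p" "is_PF (B \<union> {s}) s mult (\<lambda>v. p v - deg mult A v)"
      using False less.prems(4) unfolding is_PPF_def WW by blast
    have fA: "finite A" "finite B" using AB(4) less.prems(1) by auto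
    have cA: "card A < card W" "card B < card W"
      using AB less.prems(1) by (auto intro!: psubset_card_mono)
    obtain As1 where H1:
      "(\<forall>i < length As1. As1 ! i \<noteq> {})"
      "(\<forall>i < length As1. \<forall>j < length As1. i \<noteq> j \<longrightarrow> As1 ! i \<inter> As1 ! j = {})"
      "\<Union> (set As1) = A"
      "(\<forall>i < length As1. is_PPF (As1 ! i \<union> {s}) s mult
                (\<lambda>v. p v - deg mult (\<Union> (set (take i As1))) v))"
      using less.hyps[OF cA(1) fA(1) _ AB(1) AB(5)] less.prems(2) AB(4) by blast
    obtain As2 where H2:
      "(\<forall>i < length As2. As2 ! i \<noteq> {})"
      "(\<forall>i < length As2. \<forall>j < length As2. i \<noteq> j \<longrightarrow> As2 ! i \<inter> As2 ! j = {})"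
      "\<Union> (set As2) = B"
      "(\<forall>i < length As2. is_PPF (As2 ! i \<union> {s}) s mult
                (\<lambda>v. (p v - deg mult A v) - deg mult (\<Union> (set (take i As2))) v))"
      using less.hyps[OF cA(2) fA(2) _ AB(2) AB(6)] less.prems(2) AB(4) by blast
    have sub1: "\<And>i. i < length As1 \<Longrightarrow> As1 ! i \<subseteq> A" using H1(3) nth_mem by blast
    have sub2: "\<And>i. i < length As2 \<Longrightarrow> As2 ! i \<subseteq> B" using H2(3) nth_mem by blast
    let ?As = "As1 @ As2"
    have P1: "\<forall>i < length ?As. ?As ! i \<noteq> {}"
      using H1(1) H2(1) by (auto simp: nth_append)
    have P2: "\<forall>i < length ?As. \<forall>j < length ?As. i \<noteq> j \<longrightarrow> ?As ! i \<inter> ?As ! j = {}"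
    proof (intro allI impI)
      fix i j assume ij: "i < length ?As" "j < length ?As" "i \<noteq> j"
      show "?As ! i \<inter> ?As ! j = {}"
      proof (cases "i < length As1"; cases "j < length As1")
        assume "i < length As1" "j < length As1" then show ?thesis
          using H1(2) ij by (auto simp: nth_append)
      next
        assume a: "i < length As1" "\<not> j < length As1" then show ?thesis
          proof -
          have "j - length As1 < length As2" using ij a by simp
          then have "?As ! j \<subseteq> B" using sub2 a by (simp add: nth_append)
          moreover have "?As ! i \<subseteq> A" using sub1 a by (simp add: nth_append)
          ultimately show ?thesis using AB(3) by blast
        qed
      next
        assume a: "\<not> i < length As1" "j < length As1" then show ?thesis
          proof -
          have "i - length As1 < length As2" using ij a by simp
          then have "?As ! i \<subseteq> B" using sub2 a by (simp add: nth_append)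
          moreover have "?As ! j \<subseteq> A" using sub1 a by (simp add: nth_append)
          ultimately show ?thesis using AB(3) by blast
        qed
      next
        assume a: "\<not> i < length As1" "\<not> j < length As1" then show ?thesis
          using H2(2)[rule_format, of "i - length As1" "j - length As1"] ij
          by (auto simp: nth_append)
      qed
    qed
    have P4: "\<forall>i < length ?As. is_PPF (?As ! i \<union> {s}) s mult
                (\<lambda>v. p v - deg mult (\<Union> (set (take i ?As))) v)"
    proof (intro allI impI)
      fix i assume i: "i < length ?As"
      show "is_PPF (?As ! i \<union> {s}) s mult (\<lambda>v. p v - deg mult (\<Union> (set (take i ?As))) v)"
      proof (cases "i < length As1")
        case True then show ?thesis using H1(4) by (simp add: nth_append)
      next
        case False
        define j where "j = i - length As1"
        have j: "j < length As2" using i False j_def by auto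
        have tk: "\<Union> (set (take i ?As)) = A \<union> \<Union> (set (take j As2))"
          using False H1(3) by (simp add: j_def)
        have Xs: "\<Union> (set (take j As2)) \<subseteq> B" by (metis H2(3) Sup_subset_mono set_take_subset)
        have fX: "finite (\<Union> (set (take j As2)))" using Xs fA(2) by (rule finite_subset)
        have dis: "A \<inter> \<Union> (set (take j As2)) = {}" using Xs AB(3) by auto
        have eq: "(\<lambda>v. p v - deg mult (\<Union> (set (take i ?As))) v) =
             (\<lambda>v. (p v - deg mult A v) - deg mult (\<Union> (set (take j As2))) v)"
          unfolding tk using deg_Un[OF fA(1) fX dis] by (simp add: algebra_simps)
        show ?thesis unfolding eq using H2(4) j False by (simp add: nth_append j_def)
      qed
    qed
    have P3: "\<Union> (set ?As) = W" using H1(3) H2(3) AB(4) by simp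
    show ?thesis
      apply (rule exI[of _ ?As])
      using P1 P2 P3 P4 by (intro conjI)
  qed
qed

theorem proposition2p5:
  fixes V :: "'a set" and s :: 'a and mult :: "'a \<Rightarrow> 'a \<Rightarrow> nat" and p :: "'a \<Rightarrow> int"
  assumes "rooted_graph V s mult"
    and "connected_graph V mult"
    and "V - {s} \<noteq> {}"
    and "is_PF V s mult p"
  shows "\<exists>As :: 'a set list.
           (\<forall>i < length As. As ! i \<noteq> {}) \<and>
           (\<forall>i < length As. \<forall>j < length As. i \<noteq> j \<longrightarrow> As ! i \<inter> As ! j = {}) \<and>
           \<Union> (set As) = V - {s} \<and>
           (\<forall>i < length As.
              is_PPF (As ! i \<union> {s}) s mult
                (\<lambda>v. p v - deg mult (\<Union> (set (take i As))) v))"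
proof -
  have f: "finite V" "s \<in> V" using assms(1) unfolding rooted_graph_def by auto
  have e: "(V - {s}) \<union> {s} = V" using f by auto
  show ?thesis using gen[of "V - {s}" s mult p] f assms(3,4) e by simp
qed

end
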